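(* For any step size $\eta\ge0$ and any iteration $i$, \[ \eta(1-\eta\rho^2/8)\|\nabla\widehat{\mathcal R}(W_i)\|^2\le\widehat{\mathcal R}^{(i)}(W_i)-\widehat{\mathcal R}^{(i)}(W_{i+1}). \] If $\eta\le8/\rho^2$ then $\widehat{\mathcal R}^{(i)}(W_{i+1})\le\widehat{\mathcal R}^{(i)}(W_i)$, and if $\eta\le4/\rho^2$ then $\frac\eta2\|\nabla\widehat{\mathcal R}(W_i)\|^2\le\widehat{\mathcal R}^{(i)}(W_i)-\widehat{\mathcal R}^{(i)}(W_{i+1})$.
   Context: Sample $((x_k,y_k))_{k=1}^n$ with $\|x_k\|\le1$, $y_k\in\{\pm1\}$. $\ell(r)=\ln(1+e^{-r})$. Network of width $m$, temperature $\rho>0$, signs $a_j\in\{\pm1\}$: for $W$ with rows $w_j^\top$, $f(x;W)=\frac{\rho}{\sqrt m}\sum_ja_j\max\{0,w_j^\top x\}$, $\nabla f(x;W)=\frac{\rho}{\sqrt m}\sum_ja_j\mathbf 1[w_j^\top x\ge0]e_jx^\top$. $\widehat{\mathcal R}(W)=\frac1n\sum_k\ell(y_kf(x_k;W))$ and $\nabla\widehat{\mathcal R}(W)=\frac1n\sum_k\ell'(y_kf(x_k;W))y_k\nabla f(x_k;W)$. Gradient descent from $W_0$: $W_{i+1}=W_i-\eta\nabla\widehat{\mathcal R}(W_i)$. Features at time $i$: $\widehat{\mathcal R}^{(i)}(V)=\frac1n\sum_k\ell(y_k\langle\nabla f(x_k;W_i),V\rangle)$, $\langle A,B\rangle=\mathrm{tr}(A^\top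 B)$. $\|\cdot\|$ Frobenius norm. *)

theory Defs
  imports "HOL-Analysis.Analysis"
begin

text \<open>Weights W :: real^'d^'m (rows w_j = W$j), inputs x :: real^'d.
  The width is m = CARD('m). Frobenius norm/inner product = norm/inner on real^'d^'m.
  Samples are indexed by k < n.\<close>

definition logloss :: "real \<Rightarrow> real" where
  "logloss r = ln (1 + exp (- r))"

definition logloss' :: "real \<Rightarrow> real" where
  "logloss' r = - exp (- r) / (1 + exp (- r))"

definition net :: "real \<Rightarrow> ('m::finite \<Rightarrow> real) \<Rightarrow> real^'d^'m \<Rightarrow> real^'d \<Rightarrow> real" where
  "net \<rho> a W x = \<rho> / sqrt (real CARD('m)) * (\<Sum>j\<in>UNIV. a j * max 0 ((W $ j) \<bullet> x))"

definition net_grad :: "real \<Rightarrow> ('m::finite \<Rightarrow> real) \<Rightarrow> real^'d^'m \<Rightarrow> real^'d \<Rightarrow> real^'d^'m" where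
  "net_grad \<rho> a W x =
     (\<chi> j. (\<rho> / sqrt (real CARD('m)) * a j * (if (W $ j) \<bullet> x \<ge> 0 then 1 else 0)) *\<^sub>R x)"

definition emp_risk :: "nat \<Rightarrow> (nat \<Rightarrow> real^'d) \<Rightarrow> (nat \<Rightarrow> real) \<Rightarrow> real
    \<Rightarrow> ('m::finite \<Rightarrow> real) \<Rightarrow> real^'d^'m \<Rightarrow> real" where
  "emp_risk n x y \<rho> a W = (1 / real n) * (\<Sum>k<n. logloss (y k * net \<rho> a W (x k)))"

definition emp_risk_grad :: "nat \<Rightarrow> (nat \<Rightarrow> real^'d) \<Rightarrow> (nat \<Rightarrow> real) \<Rightarrow> real
    \<Rightarrow> ('m::finite \<Rightarrow> real) \<Rightarrow> real^'d^'m \<Rightarrow> real^'d^'m" where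
  "emp_risk_grad n x y \<rho> a W =
     (1 / real n) *\<^sub>R (\<Sum>k<n. (logloss' (y k * net \<rho> a W (x k)) * y k) *\<^sub>R net_grad \<rho> a W (x k))"

fun gd :: "nat \<Rightarrow> (nat \<Rightarrow> real^'d) \<Rightarrow> (nat \<Rightarrow> real) \<Rightarrow> real
    \<Rightarrow> ('m::finite \<Rightarrow> real) \<Rightarrow> real \<Rightarrow> real^'d^'m \<Rightarrow> nat \<Rightarrow> real^'d^'m" where
  "gd n x y \<rho> a \<eta> W0 0 = W0"
| "gd n x y \<rho> a \<eta> W0 (Suc i) =
     gd n x y \<rho> a \<eta> W0 i - \<eta> *\<^sub>R emp_risk_grad n x y \<rho> a (gd n x y \<rho> a \<eta> W0 i)"

text \<open>Feature (linearized) risk at W: R^(i)(V) with W = W_i.\<close>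
definition feat_risk :: "nat \<Rightarrow> (nat \<Rightarrow> real^'d) \<Rightarrow> (nat \<Rightarrow> real) \<Rightarrow> real
    \<Rightarrow> ('m::finite \<Rightarrow> real) \<Rightarrow> real^'d^'m \<Rightarrow> real^'d^'m \<Rightarrow> real" where
  "feat_risk n x y \<rho> a W V = (1 / real n) * (\<Sum>k<n. logloss (y k * (net_grad \<rho> a W (x k) \<bullet> V)))"

end

theory Submission
  imports Defs
begin


lemma lp_alt: "logloss' t = - 1 / (1 + exp t)"
proof -
  have e: "exp (-t) * exp t = 1" by (simp add: exp_minus)
  have ne: "exp t \<noteq> 0" by simp
  have "logloss' t = (- exp (-t) * exp t) / ((1 + exp (-t)) * exp t)"
    unfolding logloss'_def using ne by simp
  also have "\<dots> = - 1 / (1 + exp t)" using e by (simp add: distrib_right add.commute)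
  finally show ?thesis .
qed

lemma ll_deriv: "(logloss has_real_derivative logloss' t) (at t)"
proof -
  have "((\<lambda>t. ln (1 + exp (- t))) has_real_derivative (1 / (1 + exp (-t))) * (exp (-t) * (-1))) (at t)"
    by (rule derivative_eq_intros | simp add: add_pos_pos)+
  then show ?thesis unfolding logloss_def[abs_def] logloss'_def by simp
qed

lemma lp_deriv: "(logloss' has_real_derivative exp t / (1 + exp t)^2) (at t)"
proof -
  have ne: "1 + exp t \<noteq> 0" by (smt (verit) exp_gt_zero)
  have "((\<lambda>t. - 1 / (1 + exp t)) has_real_derivative (0 * (1 + exp t) - - 1 * (0 + exp t * 1)) /
     ((1 + exp t) * (1 + exp t))) (at t)"
    by (rule derivative_eq_intros refl | simp add: ne)+
  then show ?thesis unfolding lp_alt[abs_def] by (simp add: power2_eq_square)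
qed

lemma lpp_le: "exp (t::real) / (1 + exp t)^2 \<le> 1/4"
proof -
  have "0 \<le> (1 - exp t)^2" by simp
  hence "4 * exp t \<le> (1 + exp t)^2" by (simp add: power2_eq_square algebra_simps)
  have "0 < (1 + exp t)^2" by (smt (verit) exp_gt_zero zero_less_power)
  thus ?thesis using \<open>4 * exp t \<le> _\<close> by (simp add: field_simps)
qed

lemma q_mono:
  assumes "u \<le> v" shows "logloss' v - v/4 \<le> logloss' u - u/4"
proof (rule DERIV_nonpos_imp_nonincreasing[OF assms, where f="\<lambda>t. logloss' t - t/4"])
  fix z
  have "((\<lambda>t. logloss' t - t/4) has_real_derivative (exp z / (1 + exp z)^2 - 1/4)) (at z)"
    by (rule derivative_eq_intros lp_deriv refl | simp)+
  then show "\<exists>y. ((\<lambda>t. logloss' t - t/4) has_real_derivative y) (at z) \<and> y \<le> 0"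
    using lpp_le[of z] by auto
qed

lemma ll_quad: "logloss (r + s) \<le> logloss r + logloss' r * s + s^2/8"
proof -
  define h where "h s = logloss r + logloss' r * s + s^2/8 - logloss (r + s)" for s
  have dh: "(h has_real_derivative (logloss' r + t/4 - logloss' (r + t))) (at t)" for t
    unfolding h_def[abs_def]
    by (rule derivative_eq_intros ll_deriv[THEN DERIV_chain2] refl | simp)+
  have h0: "h 0 = 0" by (simp add: h_def)
  have "0 \<le> h s"
  proof (cases "s \<ge> 0")
    case True
    have "h 0 \<le> h s"
    proof (rule DERIV_nonneg_imp_nondecreasing[OF True])
      fix t assume "0 \<le> t" "t \<le> s"
      hence "logloss' (r+t) - (r+t)/4 \<le> logloss' r - r/4" using q_mono[of r "r+t"] by simp
      hence "0 \<le> logloss' r + t/4 - logloss' (r + t)" by (simp add: field_simps)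
      thus "\<exists>y. (h has_real_derivative y) (at t) \<and> y \<ge> 0"
        using dh[of t] by blast
    qed
    thus ?thesis using h0 by simp
  next
    case False
    have "h 0 \<le> h s"
    proof (rule DERIV_nonpos_imp_nonincreasing[of s 0])
      show "s \<le> 0" using False by simp
      fix t assume "s \<le> t" "t \<le> 0"
      hence "logloss' r - r/4 \<le> logloss' (r+t) - (r+t)/4" using q_mono[of "r+t" r] by simp
      hence "logloss' r + t/4 - logloss' (r + t) \<le> 0" by (simp add: field_simps)
      thus "\<exists>y. (h has_real_derivative y) (at t) \<and> y \<le> 0"
        using dh[of t] by blast
    qed
    thus ?thesis using h0 by simp
  qed
  thus ?thesis by (simp add: h_def)
qed


lemma net_eq: "net \<rho> a W x = net_grad \<rho> a W x \<bullet> W"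
proof -
  have "net_grad \<rho> a W x \<bullet> W = (\<Sum>j\<in>UNIV. \<rho> / sqrt (real CARD('a)) * (a j * max 0 ((W $ j) \<bullet> x)))"
    unfolding net_grad_def
    by (subst inner_vec_def) (rule sum.cong, auto simp: inner_commute max_def)
  thus ?thesis unfolding net_def by (simp add: sum_distrib_left)
qed

lemma grad_norm:
  fixes W :: "real^'d^'m::finite"
  assumes "\<forall>j. a j \<in> {-1, 1}" "norm x \<le> 1"
  shows "(norm (net_grad \<rho> a W x))^2 \<le> \<rho>^2"
proof -
  define c where "c j = \<rho> / sqrt (real CARD('m)) * a j * (if (W $ j) \<bullet> x \<ge> 0 then 1 else 0)" for j
  have nx: "x \<bullet> x \<le> 1" using assms(2) by (simp add: power_le_one power2_norm_eq_inner[symmetric])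
  have c2: "(c j)^2 \<le> \<rho>^2 / real CARD('m)" for j
  proof -
    have "a j = -1 \<or> a j = 1" using assms(1) by blast
    hence "(a j)^2 = 1" by auto
    thus ?thesis unfolding c_def by (auto simp: power_mult_distrib power_divide)
  qed
  have "(norm (net_grad \<rho> a W x))^2 = net_grad \<rho> a W x \<bullet> net_grad \<rho> a W x"
    by (simp add: power2_norm_eq_inner)
  also have "\<dots> = (\<Sum>j\<in>UNIV. (c j *\<^sub>R x) \<bullet> (c j *\<^sub>R x))"
    unfolding net_grad_def c_def by (subst inner_vec_def) simp
  also have "\<dots> = (\<Sum>j\<in>UNIV. (c j)^2 * (x \<bullet> x))"
    by (rule sum.cong) (simp only: inner_scaleR_left inner_scaleR_right power2_eq_square mult.assoc)+
  also have "\<dots> \<le> (\<Sum>j\<in>(UNIV::'m set). \<rho>^2 / real CARD('m))"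
  proof (rule sum_mono)
    fix j :: 'm
    have "(c j)^2 * (x \<bullet> x) \<le> (c j)^2 * 1" by (rule mult_left_mono[OF nx]) simp
    also have "\<dots> \<le> \<rho>^2 / real CARD('m)" using c2[of j] by simp
    finally show "(c j)^2 * (x \<bullet> x) \<le> \<rho>^2 / real CARD('m)" .
  qed
  also have "\<dots> = \<rho>^2" by simp
  finally show ?thesis .
qed


theorem lemmaA9:
  fixes n :: nat and x :: "nat \<Rightarrow> real^'d" and y :: "nat \<Rightarrow> real"
    and \<rho> :: real and a :: "'m::finite \<Rightarrow> real" and \<eta> :: real
    and W0 :: "real^'d^'m" and i :: nat
  assumes hx: "\<forall>k<n. norm (x k) \<le> 1"
    and hy: "\<forall>k<n. y k \<in> {-1, 1}"
    and ha: "\<forall>j. a j \<in> {-1, 1}"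
    and h\<rho>: "\<rho> > 0"
    and h\<eta>: "\<eta> \<ge> 0"
  shows "let Wi = gd n x y \<rho> a \<eta> W0 i; Wi' = gd n x y \<rho> a \<eta> W0 (Suc i);
             G = emp_risk_grad n x y \<rho> a Wi;
             Ri = feat_risk n x y \<rho> a Wi
         in \<eta> * (1 - \<eta> * \<rho>\<^sup>2 / 8) * (norm G)\<^sup>2 \<le> Ri Wi - Ri Wi'
            \<and> (\<eta> \<le> 8 / \<rho>\<^sup>2 \<longrightarrow> Ri Wi' \<le> Ri Wi)
            \<and> (\<eta> \<le> 4 / \<rho>\<^sup>2 \<longrightarrow> \<eta> / 2 * (norm G)\<^sup>2 \<le> Ri Wi - Ri Wi')"
proof -
  define W where "W = gd n x y \<rho> a \<eta> W0 i"
  define G where "G = emp_risk_grad n x y \<rho> a W"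
  define R where "R = feat_risk n x y \<rho> a W"
  define g where "g k = net_grad \<rho> a W (x k)" for k
  define r where "r k = y k * (g k \<bullet> W)" for k
  define s where "s k = - \<eta> * (y k * (g k \<bullet> G))" for k
  define N where "N = (norm G)^2"
  have W': "gd n x y \<rho> a \<eta> W0 (Suc i) = W - \<eta> *\<^sub>R G" by (simp add: W_def G_def)
  have feat: "R V = (1/n) * (\<Sum>k<n. logloss (y k * (g k \<bullet> V)))" for V
    by (simp add: R_def feat_risk_def g_def)
  have step: "y k * (g k \<bullet> (W - \<eta> *\<^sub>R G)) = r k + s k" for k
    by (simp add: r_def s_def inner_diff_right algebra_simps)
  have G_eq: "G = (1/n) *\<^sub>R (\<Sum>k<n. (logloss' (r k) * y k) *\<^sub>R g k)"
    by (simp add: G_def emp_risk_grad_def r_def g_def net_eq)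
  have GG: "G \<bullet> G = (1/n) * (\<Sum>k<n. logloss' (r k) * y k * (g k \<bullet> G))"
    by (subst (1) G_eq) (simp add: inner_sum_left)
  have sq: "(s k)^2 \<le> \<eta>^2 * \<rho>^2 * N" if "k < n" for k
  proof -
    have "y k = -1 \<or> y k = 1" using hy that by blast
    hence y2: "(y k)^2 = 1" by auto
    have "\<bar>g k \<bullet> G\<bar> \<le> norm (g k) * norm G" by (rule Cauchy_Schwarz_ineq2)
    hence "(g k \<bullet> G)^2 \<le> (norm (g k) * norm G)^2"
      by (metis abs_ge_zero power2_abs power_mono)
    also have "\<dots> = (norm (g k))^2 * N" by (simp add: N_def power_mult_distrib)
    also have "\<dots> \<le> \<rho>^2 * N" unfolding g_def
      by (rule mult_right_mono[OF grad_norm]) (use ha hx that N_def in auto)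
    finally have "(g k \<bullet> G)^2 \<le> \<rho>^2 * N" .
    hence "\<eta>^2 * (g k \<bullet> G)^2 \<le> \<eta>^2 * (\<rho>^2 * N)" by (rule mult_left_mono) simp
    moreover have "(s k)^2 = \<eta>^2 * (g k \<bullet> G)^2" using y2 by (simp add: s_def power_mult_distrib)
    ultimately show ?thesis by simp
  qed
  have N0: "N \<ge> 0" by (simp add: N_def)
  have key: "R (W - \<eta> *\<^sub>R G) \<le> R W - \<eta> * N + \<eta>^2 * \<rho>^2 * N / 8"
  proof (cases "n = 0")
    case True
    hence "N = 0" by (simp add: N_def G_eq)
    thus ?thesis using True by (simp add: feat)
  next
    case False
    hence np: "real n > 0" by simp
    have "R (W - \<eta> *\<^sub>R G) = (1/n) * (\<Sum>k<n. logloss (r k + s k))" by (simp add: feat step)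
    also have "\<dots> \<le> (1/n) * (\<Sum>k<n. logloss (r k) + logloss' (r k) * s k + (s k)^2/8)"
      by (rule mult_left_mono, rule sum_mono, rule ll_quad) simp
    also have "\<dots> = (1/n) * (\<Sum>k<n. logloss (r k)) + (1/n) * (\<Sum>k<n. logloss' (r k) * s k)
        + (1/n) * (\<Sum>k<n. (s k)^2/8)"
      by (simp add: sum.distrib distrib_left)
    also have "(1/n) * (\<Sum>k<n. logloss (r k)) = R W" by (simp add: feat r_def)
    also have "(1/n) * (\<Sum>k<n. logloss' (r k) * s k) = - \<eta> * (G \<bullet> G)"
      unfolding GG s_def by (simp add: sum_distrib_left sum_negf algebra_simps)
    also have "G \<bullet> G = N" by (simp add: N_def power2_norm_eq_inner)
    also have "(1/n) * (\<Sum>k<n. (s k)^2/8) \<le> (1/n) * (\<Sum>k<n. \<eta>^2 * \<rho>^2 * N / 8)"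
      by (rule mult_left_mono, rule sum_mono) (use sq in auto)
    also have "(1/n) * (\<Sum>k<n. \<eta>^2 * \<rho>^2 * N / 8) = \<eta>^2 * \<rho>^2 * N / 8"
      using np by simp
    finally show ?thesis by simp
  qed
  have A: "\<eta> * (1 - \<eta> * \<rho>\<^sup>2 / 8) * N \<le> R W - R (W - \<eta> *\<^sub>R G)"
    using key by (simp add: algebra_simps power2_eq_square)
  have B: "R (W - \<eta> *\<^sub>R G) \<le> R W" if "\<eta> \<le> 8 / \<rho>\<^sup>2"
  proof -
    have "\<eta> * \<rho>^2 \<le> 8" using that h\<rho> by (simp add: field_simps)
    hence "0 \<le> 1 - \<eta> * \<rho>\<^sup>2 / 8" by simp
    hence "0 \<le> \<eta> * (1 - \<eta> * \<rho>\<^sup>2 / 8) * N" using h\<eta> N0 by simp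
    thus ?thesis using A by simp
  qed
  have C: "\<eta> / 2 * N \<le> R W - R (W - \<eta> *\<^sub>R G)" if "\<eta> \<le> 4 / \<rho>\<^sup>2"
  proof -
    have "\<eta> * \<rho>^2 \<le> 4" using that h\<rho> by (simp add: field_simps)
    hence "1/2 \<le> 1 - \<eta> * \<rho>\<^sup>2 / 8" by simp
    hence "\<eta> * (1/2) * N \<le> \<eta> * (1 - \<eta> * \<rho>\<^sup>2 / 8) * N"
      using h\<eta> N0 by (intro mult_right_mono mult_left_mono) auto
    thus ?thesis using A by simp
  qed
  show ?thesis unfolding Let_def W' W_def[symmetric] G_def[symmetric] R_def[symmetric] N_def[symmetric]
    using A B C by blast
qed

end
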